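(* Let $U$ be a finite nonempty set, $R$ an equivalence relation on $U$, and $M(R)$ the support matroid induced by $R$. Then the family of closed sets of $M(R)$ is $$\mathbf{L}(R)=\Big\{X\subseteq U : \bigcup_{x\in X} RN(x)=X\Big\}.$$
   Context: For $x\in U$, $RN(x)=\{y\in U\mid xRy\}$; $R^{*}(X)=\{x\in U\mid RN(x)\cap X\neq\emptyset\}$. Let $\mathbf{S}(R)=\{X\subseteq U\mid R^{*}(X)=U\}$. The support matroid $M(R)=(U,\mathbf{I}(R))$ is the matroid on $U$ whose independent sets $\mathbf{I}(R)$ are the subsets of inclusion-minimal members of $\mathbf{S}(R)$. For a matroid $(U,\mathbf{I})$, the rank is $r(X)=\max\{|I|\mid I\subseteq X, I\in\mathbf{I}\}$, the closure is $cl(X)=\{e\in U\mid r(X)=r(X\cup\{e\})\}$, and $X$ is closed if $cl(X)=X$. *)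

theory Defs
  imports Main
begin

definition RN :: "'a set \<Rightarrow> 'a rel \<Rightarrow> 'a \<Rightarrow> 'a set" where
  "RN U R x = {y \<in> U. (x, y) \<in> R}"

definition upper_approx :: "'a set \<Rightarrow> 'a rel \<Rightarrow> 'a set \<Rightarrow> 'a set" where
  "upper_approx U R X = {x \<in> U. RN U R x \<inter> X \<noteq> {}}"

definition support_sets :: "'a set \<Rightarrow> 'a rel \<Rightarrow> 'a set set" where
  "support_sets U R = {X. X \<subseteq> U \<and> upper_approx U R X = U}"

definition minimal_support_sets :: "'a set \<Rightarrow> 'a rel \<Rightarrow> 'a set set" where
  "minimal_support_sets U R =
     {X \<in> support_sets U R. \<forall>Y \<in> support_sets U R. Y \<subseteq> X \<longrightarrow> Y = X}"

definition support_indep :: "'a set \<Rightarrow> 'a rel \<Rightarrow> 'a set set" where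
  "support_indep U R = {I. \<exists>B \<in> minimal_support_sets U R. I \<subseteq> B}"

definition mrank :: "'a set set \<Rightarrow> 'a set \<Rightarrow> nat" where
  "mrank Ind X = Max {card I | I. I \<subseteq> X \<and> I \<in> Ind}"

definition mclosure :: "'a set \<Rightarrow> 'a set set \<Rightarrow> 'a set \<Rightarrow> 'a set" where
  "mclosure U Ind X = {e \<in> U. mrank Ind X = mrank Ind (X \<union> {e})}"

definition closed_sets :: "'a set \<Rightarrow> 'a set set \<Rightarrow> 'a set set" where
  "closed_sets U Ind = {X. X \<subseteq> U \<and> mclosure U Ind X = X}"

end

theory Submission
  imports Defs
begin

definition pw :: "'a set \<Rightarrow> 'a rel \<Rightarrow> 'a set \<Rightarrow> bool" where
  "pw U R I \<longleftrightarrow> I \<subseteq> U \<and> (\<forall>a\<in>I. \<forall>b\<in>I. (a,b)\<in>R \<longrightarrow> a=b)"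

lemma support_iff:
  assumes "equiv U R"
  shows "X \<in> support_sets U R \<longleftrightarrow> X \<subseteq> U \<and> (\<forall>u\<in>U. \<exists>x\<in>X. (u,x)\<in>R)"
  using assms unfolding support_sets_def upper_approx_def RN_def equiv_def refl_on_def
  by blast

lemma min_pw:
  assumes e: "equiv U R" and B: "B \<in> minimal_support_sets U R"
  shows "pw U R B"
proof -
  have sB: "B \<in> support_sets U R" and mn: "\<forall>Y \<in> support_sets U R. Y \<subseteq> B \<longrightarrow> Y = B"
    using B unfolding minimal_support_sets_def by auto
  have BU: "B \<subseteq> U" and cov: "\<forall>u\<in>U. \<exists>x\<in>B. (u,x)\<in>R" using sB support_iff[OF e] by auto
  have "a = b" if "a \<in> B" "b \<in> B" "(a,b) \<in> R" for a b
  proof (rule ccontr)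
    assume ne: "a \<noteq> b"
    have "B - {b} \<in> support_sets U R"
      unfolding support_iff[OF e]
    proof (intro conjI ballI)
      show "B - {b} \<subseteq> U" using BU by auto
      fix u assume "u \<in> U"
      then obtain x where "x \<in> B" "(u,x) \<in> R" using cov by auto
      show "\<exists>x\<in>B - {b}. (u, x) \<in> R"
      proof (cases "x = b")
        case True
        with \<open>(u,x)\<in>R\<close> that e have "(u,a) \<in> R" unfolding equiv_def sym_def trans_def by blast
        then show ?thesis using that ne by auto
      next
        case False then show ?thesis using \<open>x \<in> B\<close> \<open>(u,x)\<in>R\<close> by auto
      qed
    qed
    then show False using mn that by auto
  qed
  then show ?thesis using BU unfolding pw_def by auto
qed

lemma pw_ext:
  assumes e: "equiv U R" and I: "pw U R I"
  shows "\<exists>B \<in> minimal_support_sets U R. I \<subseteq> B"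
proof -
  define r where "r u = (SOME y. y \<in> R``{u})" for u
  have ru: "(u, r u) \<in> R" if "u \<in> U" for u
  proof -
    have "u \<in> R``{u}" using e that unfolding equiv_def refl_on_def by auto
    then show ?thesis unfolding r_def by (metis Image_singleton_iff someI)
  qed
  have req: "r u = r u'" if "(u,u') \<in> R" for u u'
    using equiv_class_eq[OF e that] unfolding r_def by simp
  have RU: "R \<subseteq> U \<times> U" using e unfolding equiv_def refl_on_def by auto
  have sy: "(a,b)\<in>R \<Longrightarrow> (b,a)\<in>R" for a b using e unfolding equiv_def sym_def by blast
  have tr: "(a,b)\<in>R \<Longrightarrow> (b,c)\<in>R \<Longrightarrow> (a,c)\<in>R" for a b c using e unfolding equiv_def trans_def by blast
  define B where "B = I \<union> r ` {u\<in>U. \<forall>i\<in>I. (u,i)\<notin>R}"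
  have IU: "I \<subseteq> U" and Ip: "\<forall>a\<in>I. \<forall>b\<in>I. (a,b)\<in>R \<longrightarrow> a=b" using I unfolding pw_def by auto
  have BU: "B \<subseteq> U" unfolding B_def using IU ru RU by blast
  have pwB: "a = b" if ab: "a \<in> B" "b \<in> B" "(a,b) \<in> R" for a b
  proof -
    have ha: "a \<in> I \<or> (\<exists>u\<in>U. (\<forall>i\<in>I. (u,i)\<notin>R) \<and> a = r u)" using ab(1) unfolding B_def image_iff by blast
    have hb: "b \<in> I \<or> (\<exists>u\<in>U. (\<forall>i\<in>I. (u,i)\<notin>R) \<and> b = r u)" using ab(2) unfolding B_def image_iff by blast
    show ?thesis
    proof (cases "a \<in> I")
      case aI: True
      show ?thesis
      proof (cases "b \<in> I")
        case True then show ?thesis using Ip aI ab(3) by blast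
      next
        case False
        then obtain u where u: "u \<in> U" "\<forall>i\<in>I. (u,i)\<notin>R" "b = r u" using hb by blast
        have "(u,a) \<in> R" using tr[OF ru[OF u(1)] sy[OF ab(3)[unfolded u(3)]]] .
        then show ?thesis using u(2) aI by blast
      qed
    next
      case aN: False
      then obtain u where u: "u \<in> U" "\<forall>i\<in>I. (u,i)\<notin>R" "a = r u" using ha by blast
      show ?thesis
      proof (cases "b \<in> I")
        case True
        have "(u,b) \<in> R" using tr[OF ru[OF u(1)] ab(3)[unfolded u(3)]] .
        then show ?thesis using u(2) True by blast
      next
        case False
        then obtain v where v: "v \<in> U" "b = r v" using hb by blast
        have "(u, r v) \<in> R" using tr[OF ru[OF u(1)] ab(3)[unfolded u(3) v(2)]] .
        then have "(u,v) \<in> R" using tr[OF _ sy[OF ru[OF v(1)]]] by blast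
        then show ?thesis using req u(3) v(2) by auto
      qed
    qed
  qed
  have sB: "B \<in> support_sets U R"
    unfolding support_iff[OF e]
  proof (intro conjI ballI)
    show "B \<subseteq> U" by (rule BU)
    fix u assume u: "u \<in> U"
    show "\<exists>x\<in>B. (u, x) \<in> R"
    proof (cases "\<exists>i\<in>I. (u,i)\<in>R")
      case True then show ?thesis unfolding B_def by auto
    next
      case False then have "r u \<in> B" unfolding B_def using u by auto
      then show ?thesis using ru[OF u] by auto
    qed
  qed
  have "B \<in> minimal_support_sets U R"
    unfolding minimal_support_sets_def
  proof (intro CollectI conjI ballI impI sB)
    fix Y assume Y: "Y \<in> support_sets U R" "Y \<subseteq> B"
    have "b \<in> Y" if "b \<in> B" for b
    proof -
      have bU: "b \<in> U" using BU that by blast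
      have "\<forall>u\<in>U. \<exists>x\<in>Y. (u,x)\<in>R" using Y(1) support_iff[OF e] by blast
      then obtain y where "y \<in> Y" "(b,y) \<in> R" using bU by blast
      then show ?thesis using pwB[of b y] that Y(2) by auto
    qed
    then show "Y = B" using Y(2) by auto
  qed
  moreover have "I \<subseteq> B" unfolding B_def by (rule Un_upper1)
  ultimately show ?thesis by blast
qed

lemma indep_eq:
  assumes e: "equiv U R"
  shows "support_indep U R = {I. pw U R I}"
proof (intro set_eqI iffI)
  fix I assume "I \<in> support_indep U R"
  then obtain B where "B \<in> minimal_support_sets U R" "I \<subseteq> B" unfolding support_indep_def by auto
  then show "I \<in> {I. pw U R I}" using min_pw[OF e] unfolding pw_def by blast
next
  fix I assume "I \<in> {I. pw U R I}"
  then show "I \<in> support_indep U R" using pw_ext[OF e] unfolding support_indep_def by auto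
qed

lemma rank_props:
  assumes f: "finite U"
  shows "\<exists>I. I \<subseteq> X \<and> pw U R I \<and> card I = mrank {I. pw U R I} X"
    and "I \<subseteq> X \<Longrightarrow> pw U R I \<Longrightarrow> card I \<le> mrank {I. pw U R I} X"
proof -
  let ?S = "{card I | I. I \<subseteq> X \<and> I \<in> {I. pw U R I}}"
  have fin: "finite ?S"
  proof -
    have "?S \<subseteq> card ` Pow U" unfolding pw_def by auto
    then show ?thesis using f finite_subset by blast
  qed
  have ne: "?S \<noteq> {}" using pw_def[of U R "{}"] by auto
  show "\<exists>I. I \<subseteq> X \<and> pw U R I \<and> card I = mrank {I. pw U R I} X"
    using Max_in[OF fin ne] unfolding mrank_def by auto
  show "I \<subseteq> X \<Longrightarrow> pw U R I \<Longrightarrow> card I \<le> mrank {I. pw U R I} X"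
    unfolding mrank_def using Max_ge[OF fin] by blast
qed

lemma closure_eq:
  assumes f: "finite U" and e: "equiv U R"
  shows "mclosure U {I. pw U R I} X = {y\<in>U. \<exists>x\<in>X. (x,y)\<in>R}"
proof -
  let ?r = "mrank {I. pw U R I}"
  have RU: "R \<subseteq> U \<times> U" using e unfolding equiv_def refl_on_def by auto
  have rf: "(u,u)\<in>R" if "u \<in> U" for u using e that unfolding equiv_def refl_on_def by auto
  have sy: "(a,b)\<in>R \<Longrightarrow> (b,a)\<in>R" for a b using e unfolding equiv_def sym_def by blast
  have tr: "(a,b)\<in>R \<Longrightarrow> (b,c)\<in>R \<Longrightarrow> (a,c)\<in>R" for a b c using e unfolding equiv_def trans_def by blast
  have mono: "?r X \<le> ?r (X \<union> {y})" for y
  proof -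
    obtain I where "I \<subseteq> X" "pw U R I" "card I = ?r X" using rank_props(1)[OF f] by blast
    then show ?thesis using rank_props(2)[OF f, of I "X \<union> {y}"] by auto
  qed
  have "?r X = ?r (X \<union> {y}) \<longleftrightarrow> (\<exists>x\<in>X. (x,y)\<in>R)" if y: "y \<in> U" for y
  proof
    assume "?r X = ?r (X \<union> {y})"
    show "\<exists>x\<in>X. (x,y)\<in>R"
    proof (rule ccontr)
      assume nx: "\<not> (\<exists>x\<in>X. (x,y)\<in>R)"
      obtain I where I: "I \<subseteq> X" "pw U R I" "card I = ?r X" using rank_props(1)[OF f] by blast
      have yI: "y \<notin> I" using nx I(1) rf[OF y] by auto
      have "pw U R (insert y I)" using I nx y sy unfolding pw_def by blast
      moreover have fI: "finite I" using I(2) f unfolding pw_def using finite_subset by blast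
      moreover have "insert y I \<subseteq> X \<union> {y}" using I(1) by auto
      ultimately have "card (insert y I) \<le> ?r (X \<union> {y})"
        using rank_props(2)[OF f, of "insert y I" "X \<union> {y}"] by blast
      then show False using yI fI I(3) \<open>?r X = ?r (X \<union> {y})\<close> by simp
    qed
  next
    assume "\<exists>x\<in>X. (x,y)\<in>R"
    then obtain x where x: "x \<in> X" "(x,y)\<in>R" by blast
    obtain I where I: "I \<subseteq> X \<union> {y}" "pw U R I" "card I = ?r (X \<union> {y})" using rank_props(1)[OF f] by blast
    have fI: "finite I" using I(2) f unfolding pw_def using finite_subset by blast
    have "?r (X \<union> {y}) \<le> ?r X"
    proof (cases "y \<in> I \<and> y \<notin> X")
      case False
      then have "I \<subseteq> X" using I(1) by auto
      then show ?thesis using rank_props(2)[OF f, of I X] I by auto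
    next
      case True
      show ?thesis
      proof (cases "x \<in> I")
        case True
        then have "x = y" using \<open>y \<in> I \<and> y \<notin> X\<close> I(2) x unfolding pw_def by blast
        then show ?thesis using x True \<open>y \<in> I \<and> y \<notin> X\<close> by auto
      next
        case False
        define J where "J = insert x (I - {y})"
        have "pw U R J" using I(2) x RU sy tr \<open>y \<in> I \<and> y \<notin> X\<close> unfolding pw_def J_def by blast
        moreover have "J \<subseteq> X" using I(1) x unfolding J_def by auto
        moreover have "card J = card I" unfolding J_def using fI False True
          using card.remove[OF fI, of y] by simp
        ultimately show ?thesis using rank_props(2)[OF f, of J X] I(3) by auto
      qed
    qed
    then show "?r X = ?r (X \<union> {y})" using mono[of y] by auto
  qed
  then show ?thesis unfolding mclosure_def by auto
qed

theorem proposition9: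
  fixes U :: "'a set" and R :: "'a rel"
  assumes "finite U" and "U \<noteq> {}" and "equiv U R"
  shows "closed_sets U (support_indep U R) = {X. X \<subseteq> U \<and> (\<Union>x\<in>X. RN U R x) = X}"
proof -
  have "{y\<in>U. \<exists>x\<in>X. (x,y)\<in>R} = (\<Union>x\<in>X. RN U R x)" for X
    unfolding RN_def by auto
  then show ?thesis
    unfolding closed_sets_def indep_eq[OF assms(3)] closure_eq[OF assms(1,3)] by auto
qed

end
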